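(* Let $p > 3$ be a prime and let $n \in \mathbb{N}$ with $n \ge 2^{18} \log p$. Set $m := \lfloor 2^{12} \log p \rfloor$. Let $v \in \mathbb{Z}_p^n$. There exists $U \subset [n]$ with $|U| \le m$ such that $$|T_{8\ell}(v)| \le 2\, |F(v_U)| \qquad \text{and} \qquad F(v_U) \subset T_t(v),$$ where $\ell := 2^{-16} |v|$ and $t := 2^{-7} n$.
   Context: $\log$ is the natural logarithm. For $w \in \mathbb{Z}_p^r$, $|w|$ is the number of nonzero coordinates, and for $s \ge 0$ $$T_s(w) := \Big\{ k \in \mathbb{Z}_p : \sum_{i=1}^r \Big\| \frac{k \cdot w_i}{p} \Big\|^2 \le s \Big\}, \qquad F(w) := T_{\log p}(w),$$ where $k \cdot w_i \in \mathbb{Z}$ is the product of the representatives of $k$ and $w_i$ in $\{0,\ldots,p-1\}$, and $\|x\|$ is the distance from $x$ to the nearest integer. For $U \subset [n]$, $v_U \in \mathbb{Z}_p^{|U|}$ is the restriction of $v$ to the coordinates in $U$. *)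

theory Defs
  imports "HOL-Analysis.Analysis"
begin

definition near_dist :: "real \<Rightarrow> real" where
  "near_dist x = \<bar>x - of_int (round x)\<bar>"

text \<open>Vectors in Z_p^n are modelled as functions v :: nat => nat with coordinates
  indexed by a finite set I (for v in Z_p^n, I = {1..n}; for v_U, I = U), each value
  being the representative in {0..p-1}.\<close>
definition Tset :: "nat \<Rightarrow> nat set \<Rightarrow> (nat \<Rightarrow> nat) \<Rightarrow> real \<Rightarrow> nat set" where
  "Tset p I v s = {k \<in> {..<p}. (\<Sum>i\<in>I. (near_dist (real (k * v i) / real p))\<^sup>2) \<le> s}"

definition Fset :: "nat \<Rightarrow> nat set \<Rightarrow> (nat \<Rightarrow> nat) \<Rightarrow> nat set" where
  "Fset p I v = Tset p I v (ln (real p))"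

definition supp_size :: "nat \<Rightarrow> nat set \<Rightarrow> (nat \<Rightarrow> nat) \<Rightarrow> nat" where
  "supp_size p I v = card {i \<in> I. v i mod p \<noteq> 0}"

end

theory Submission
  imports Defs
begin

definition wt :: "real \<Rightarrow> nat set \<Rightarrow> nat set \<Rightarrow> real" where
 "wt q A U = q ^ card U * (1-q) ^ card (A - U)"

lemma wt_nonneg: "0 \<le> q \<Longrightarrow> q \<le> 1 \<Longrightarrow> 0 \<le> wt q A U" by (simp add: wt_def)

lemma mgf: fixes g :: "nat \<Rightarrow> real" assumes "finite A"
 shows "(\<Sum>U\<in>Pow A. wt q A U * exp (\<Sum>i\<in>U. g i)) = (\<Prod>i\<in>A. 1 - q + q * exp (g i))"
proof -
  have "(\<Prod>i\<in>A. 1 - q + q * exp (g i)) = (\<Prod>i\<in>A. q * exp (g i) + (1 - q))" by (simp add: algebra_simps)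
  also have "\<dots> = (\<Sum>X\<in>Pow A. (\<Prod>x\<in>X. q * exp (g x)) * (\<Prod>x\<in>A-X. 1 - q))" by (rule prod_add[OF assms])
  also have "\<dots> = (\<Sum>U\<in>Pow A. wt q A U * exp (\<Sum>i\<in>U. g i))"
  proof (rule sum.cong[OF refl])
    fix X assume "X \<in> Pow A"
    then have "finite X" using assms finite_subset by auto
    then show "(\<Prod>x\<in>X. q * exp (g x)) * (\<Prod>x\<in>A-X. 1 - q) = wt q A X * exp (\<Sum>i\<in>X. g i)"
      by (simp add: wt_def prod.distrib exp_sum)
  qed
  finally show ?thesis by simp
qed

lemma wt_sum: "finite A \<Longrightarrow> (\<Sum>U\<in>Pow A. wt q A U) = 1"
  using mgf[of A q "\<lambda>_. 0"] by simp

lemma prod_bound: fixes g :: "nat \<Rightarrow> real" assumes "finite A" "0 \<le> q" "q \<le> 1"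
  shows "(\<Prod>i\<in>A. 1 - q + q * exp (g i)) \<le> exp (q * (\<Sum>i\<in>A. exp (g i) - 1))"
proof -
  have "(\<Prod>i\<in>A. 1 - q + q * exp (g i)) \<le> (\<Prod>i\<in>A. exp (q * (exp (g i) - 1)))"
  proof (rule prod_mono)
    fix i assume "i \<in> A"
    have "0 \<le> q * exp (g i)" using assms by simp
    moreover have "1 + q * (exp (g i) - 1) \<le> exp (q * (exp (g i) - 1))" by (rule exp_ge_add_one_self)
    moreover have "1 - q + q * exp (g i) = 1 + q * (exp (g i) - 1)" by (simp add: algebra_simps)
    ultimately show "0 \<le> 1 - q + q * exp (g i) \<and> 1 - q + q * exp (g i) \<le> exp (q * (exp (g i) - 1))"
      using assms by linarith
  qed
  also have "\<dots> = exp (q * (\<Sum>i\<in>A. exp (g i) - 1))"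
    using assms(1) by (simp add: exp_sum sum_distrib_left)
  finally show ?thesis .
qed

lemma mgf_bound: fixes g d :: "nat \<Rightarrow> real" assumes "finite A" "0 \<le> q" "q \<le> 1" "\<And>U. U \<in> Pow A \<Longrightarrow> h U \<le> c * exp (\<Sum>i\<in>U. g i)" "c \<ge> 0"
  "\<And>i. i \<in> A \<Longrightarrow> exp (g i) - 1 \<le> d i"
  shows "(\<Sum>U\<in>Pow A. wt q A U * h U) \<le> c * exp (q * (\<Sum>i\<in>A. d i))"
proof -
  have "(\<Sum>U\<in>Pow A. wt q A U * h U) \<le> (\<Sum>U\<in>Pow A. wt q A U * (c * exp (\<Sum>i\<in>U. g i)))"
    by (rule sum_mono, rule mult_left_mono) (use assms wt_nonneg in auto)
  also have "\<dots> = c * (\<Sum>U\<in>Pow A. wt q A U * exp (\<Sum>i\<in>U. g i))"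
    by (simp add: sum_distrib_left algebra_simps)
  also have "\<dots> \<le> c * exp (q * (\<Sum>i\<in>A. exp (g i) - 1))"
    using mgf[OF assms(1)] prod_bound[OF assms(1-3)] assms(5) by (simp add: mult_left_mono)
  also have "\<dots> \<le> c * exp (q * (\<Sum>i\<in>A. d i))"
    by (intro mult_left_mono exp_mono sum_mono) (use assms in auto)
  finally show ?thesis .
qed

lemma exp_neg_bd: fixes x :: real assumes "0 \<le> x" "x \<le> 1" shows "exp (- x) - 1 \<le> - x / 2"
proof -
  have "1 + x \<le> exp x" by (rule exp_ge_add_one_self)
  hence "exp (-x) \<le> 1 / (1 + x)" using assms by (simp add: exp_minus field_simps)
  also have "\<dots> \<le> 1 - x/2"
  proof -
    have "x * x \<le> 1 * x" using assms by (intro mult_right_mono) auto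
    then have "1 \<le> (1 - x/2) * (1 + x)" by (simp add: algebra_simps)
    then show ?thesis using assms by (simp add: divide_le_eq)
  qed
  finally show ?thesis by simp
qed

lemma exp_pos_bd: fixes x :: real assumes "0 \<le> x" "x \<le> 1" shows "exp x - 1 \<le> 2 * x"
proof -
  have "exp x \<le> 1 + x + x^2" by (rule exp_bound[OF assms])
  moreover have "x^2 \<le> x" using assms by (simp add: power2_eq_square mult_left_le_one_le)
  ultimately show ?thesis by simp
qed

lemma nd_bounds: "0 \<le> (near_dist x)^2 \<and> (near_dist x)^2 \<le> 1/4"
proof -
  have "near_dist x \<le> 1/2" "0 \<le> near_dist x" unfolding near_dist_def
    using of_int_round_abs_le[of x] by (auto simp: abs_minus_commute)
  then have "(near_dist x)^2 \<le> (1/2)^2" by (intro power_mono)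
  then show ?thesis by (simp add: power2_eq_square)
qed


lemma E_sum: "(\<Sum>U\<in>P. w U * (\<Sum>k\<in>K. h k U)) = (\<Sum>k\<in>K. \<Sum>U\<in>P. (w U * h k U :: real))"
  by (simp add: sum_distrib_left sum.swap[of _ K])

lemma sum_ind: "finite T \<Longrightarrow> (\<Sum>k\<in>T. if P k then 1::real else 0) = real (card {k\<in>T. P k})"
  by (simp add: sum.If_cases Int_def)

lemma ln_ge1: assumes "(p::nat) > 3" shows "ln (real p) \<ge> 1"
proof -
  have "exp 1 \<le> real p" using exp_le assms by linarith
  then have "ln (exp 1) \<le> ln (real p)" using assms by (subst ln_le_cancel_iff) auto
  then show ?thesis by simp
qed

lemma exp_neg_le: assumes "0 < a" "a \<le> exp (y::real)" shows "exp (-y) \<le> 1/a"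
proof -
  have "inverse (exp y) \<le> inverse a" by (rule le_imp_inverse_le[OF assms(2,1)])
  then show ?thesis by (simp add: exp_minus inverse_eq_divide)
qed

lemma exp_small1: "exp (1/128 - 27) \<le> (1/8::real)"
proof -
  have "1 + (27 - 1/128) \<le> exp (27 - 1/128::real)" by (rule exp_ge_add_one_self)
  then have "8 \<le> exp (27 - 1/128::real)" by linarith
  from exp_neg_le[OF _ this] show ?thesis by simp
qed

lemma exp_small2: "exp (-2) \<le> (1/3::real)"
proof -
  have "1 + 2 \<le> exp (2::real)" by (rule exp_ge_add_one_self)
  then have "3 \<le> exp (2::real)" by linarith
  from exp_neg_le[OF _ this] show ?thesis by simp
qed

lemma exp_small3: assumes "x \<ge> (64::real)" shows "exp (- x / 8) \<le> 1/8"
proof -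
  have "1 + x/8 \<le> exp (x/8)" by (rule exp_ge_add_one_self)
  then have "8 \<le> exp (x/8)" using assms by linarith
  from exp_neg_le[OF _ this] show ?thesis by simp
qed

theorem lemma3p6:
  fixes p n :: nat and v :: "nat \<Rightarrow> nat"
  assumes "prime p" and "p > 3"
    and "real n \<ge> 2 ^ 18 * ln (real p)"
    and "\<forall>i\<in>{1..n}. v i < p"
  shows "\<exists>U \<subseteq> {1..n}.
           real (card U) \<le> real_of_int \<lfloor>2 ^ 12 * ln (real p)\<rfloor> \<and>
           real (card (Tset p {1..n} v (8 * (real (supp_size p {1..n} v) / 2 ^ 16))))
             \<le> 2 * real (card (Fset p U v)) \<and>
           Fset p U v \<subseteq> Tset p {1..n} v (real n / 2 ^ 7)"
proof -
  define A where "A = {1..n}"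
  define L where "L = ln (real p)"
  define M where "M = real_of_int \<lfloor>2 ^ 12 * ln (real p)\<rfloor>"
  define f where "f k i = (near_dist (real (k * v i) / real p))\<^sup>2" for k i
  define S where "S k = (\<Sum>i\<in>A. f k i)" for k
  define q where "q = M / (2 * real n)"
  define T where "T = Tset p {1..n} v (8 * (real (supp_size p {1..n} v) / 2 ^ 16))"
  define Bad where "Bad = {k\<in>{..<p}. S k > real n / 2^7}"
  define E where "E h = (\<Sum>U\<in>Pow A. wt q A U * h U)" for h :: "nat set \<Rightarrow> real"
  define ind1 where "ind1 U = (if real (card U) > M then 1 else 0::real)" for U :: "nat set"
  define ind2 where "ind2 U = (\<Sum>k\<in>Bad. if (\<Sum>i\<in>U. f k i) \<le> L then 1 else 0::real)" for U :: "nat set"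
  define ind3 where "ind3 U = (\<Sum>k\<in>T. if (\<Sum>i\<in>U. f k i) > L then 1 else 0::real)" for U :: "nat set"
  have finA: "finite A" by (simp add: A_def)
  have cardA: "card A = n" by (simp add: A_def)
  have L1: "L \<ge> 1" unfolding L_def by (rule ln_ge1[OF assms(2)])
  have ppos: "real p > 0" using assms(2) by simp
  have expL: "exp L = real p" unfolding L_def using ppos by simp
  have nL: "real n \<ge> 2^18 * L" using assms(3) by (simp add: L_def)
  have "(2::real)^18 * L > 0" using L1 by simp
  then have npos: "real n > 0" using nL by linarith
  have M1: "M \<le> 2^12 * L" "M \<ge> 2^12 * L - 1" unfolding M_def L_def
    using floor_correct[of "2 ^ 12 * ln (real p)"] by linarith+
  have "(2::real)^12 * L \<ge> 4096" using L1 by simp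
  then have M64: "M \<ge> 64" using M1 by linarith
  have q0: "0 \<le> q" using M1 L1 npos by (simp add: q_def)
  have q1: "q \<le> 1" using M1 L1 npos nL by (simp add: q_def field_simps)
  have qn: "2 * q * real n = M" using npos by (simp add: q_def)
  have fb: "0 \<le> f k i \<and> f k i \<le> 1/4" for k i unfolding f_def by (rule nd_bounds)
  have Tsub: "T \<subseteq> {..<p}" by (auto simp: T_def Tset_def)
  then have finT: "finite T" using finite_subset by blast
  have finBad: "finite Bad" by (simp add: Bad_def)
  have cardBad: "real (card Bad) \<le> real p"
    unfolding Bad_def by (metis (no_types, lifting) card_lessThan card_mono finite_lessThan mem_Collect_eq of_nat_le_iff subsetI lessThan_iff)
  have wsum: "E (\<lambda>_. 1) = 1" unfolding E_def using wt_sum[OF finA] by simp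
  have Esum: "E (\<lambda>U. \<Sum>k\<in>K. h k U) = (\<Sum>k\<in>K. E (h k))" for K h
    unfolding E_def by (rule E_sum)
  have C1: "E ind1 \<le> 1/8"
  proof -
    have "E ind1 \<le> exp (-M/2) * exp (q * (\<Sum>i\<in>A. 3/4))"
      unfolding E_def
    proof (rule mgf_bound[OF finA q0 q1, where g = "\<lambda>_. 1/2"])
      fix U assume "U \<in> Pow A"
      have "ind1 U \<le> exp ((real (card U) - M) / 2)"
        unfolding ind1_def by (auto simp: less_eq_real_def)
      also have "\<dots> = exp (-M/2) * exp (\<Sum>i\<in>U. 1/2)"
        by (simp add: mult_exp_exp diff_divide_distrib)
      finally show "ind1 U \<le> exp (-M/2) * exp (\<Sum>i\<in>U. 1/2)" .
    next
      fix i show "exp (1/2) - 1 \<le> (3/4::real)" using exp_bound[of "1/2::real"] by (simp add: power2_eq_square)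
    next
      show "0 \<le> exp (-M/2)" by simp
    qed
    also have "\<dots> = exp (-M/8)" using qn cardA by (simp add: mult_exp_exp)
    also have "\<dots> \<le> 1/8" by (rule exp_small3[OF M64])
    finally show ?thesis .
  qed
  have Lp: "2^12 * L \<ge> M" "M \<ge> 2^12 * L - 1" using M1 by auto
  have C2k: "E (\<lambda>U. if (\<Sum>i\<in>U. f k i) \<le> L then 1 else 0) \<le> exp (1/128 - 28 * L)" if k: "k \<in> Bad" for k
  proof -
    have "E (\<lambda>U. if (\<Sum>i\<in>U. f k i) \<le> L then 1 else 0) \<le> exp (4*L) * exp (q * (\<Sum>i\<in>A. - 2 * f k i))"
      unfolding E_def
    proof (rule mgf_bound[OF finA q0 q1, where g = "\<lambda>i. - 4 * f k i"])
      fix U :: "nat set" assume "U \<in> Pow A"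
      have "(if (\<Sum>i\<in>U. f k i) \<le> L then 1 else 0) \<le> exp (4*L - 4 * (\<Sum>i\<in>U. f k i))" by auto
      also have "\<dots> = exp (4*L) * exp (\<Sum>i\<in>U. - 4 * f k i)"
        by (simp add: mult_exp_exp sum_distrib_left sum_negf)
      finally show "(if (\<Sum>i\<in>U. f k i) \<le> L then 1 else 0) \<le> exp (4*L) * exp (\<Sum>i\<in>U. - 4 * f k i)" .
    next
      fix i show "exp (- 4 * f k i) - 1 \<le> - 2 * f k i" using exp_neg_bd[of "4 * f k i"] fb[of k i] by simp
    next
      show "0 \<le> exp (4*L)" by simp
    qed
    also have "(\<Sum>i\<in>A. - 2 * f k i) = -2 * S k" by (simp add: S_def sum_distrib_left sum_negf)
    also have "exp (4*L) * exp (q * (-2 * S k)) = exp (4*L - 2 * (q * S k))" by (simp add: mult_exp_exp)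
    also have "\<dots> \<le> exp (1/128 - 28 * L)"
    proof -
      have "S k > real n / 2^7" using k by (simp add: Bad_def)
      then have "q * S k \<ge> q * (real n / 2^7)" by (intro mult_left_mono q0) simp
      moreover have "q * (real n / 2^7) = M / 256" using qn by (simp add: field_simps)
      ultimately show ?thesis using Lp by simp
    qed
    finally show ?thesis .
  qed
  have C2: "E ind2 \<le> 1/8"
  proof -
    have "E ind2 = (\<Sum>k\<in>Bad. E (\<lambda>U. if (\<Sum>i\<in>U. f k i) \<le> L then 1 else 0))"
      unfolding ind2_def by (rule Esum)
    also have "\<dots> \<le> (\<Sum>k\<in>Bad. exp (1/128 - 28 * L))" by (rule sum_mono) (rule C2k)
    also have "\<dots> = real (card Bad) * exp (1/128 - 28 * L)" by simp
    also have "\<dots> \<le> real p * exp (1/128 - 28 * L)" by (rule mult_right_mono[OF cardBad]) simp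
    also have "\<dots> = exp (1/128 - 27 * L)" by (simp add: expL[symmetric] mult_exp_exp)
    also have "\<dots> \<le> exp (1/128 - 27)" using L1 by simp
    also have "\<dots> \<le> 1/8" by (rule exp_small1)
    finally show ?thesis .
  qed
  have suppn: "real (supp_size p {1..n} v) \<le> real n"
    unfolding supp_size_def by (metis (no_types, lifting) card_atLeastAtMost card_mono diff_Suc_1 finite_atLeastAtMost mem_Collect_eq of_nat_le_iff subsetI)
  have C3k: "E (\<lambda>U. if (\<Sum>i\<in>U. f k i) > L then 1 else 0) \<le> 1/3" if k: "k \<in> T" for k
  proof -
    have Sk: "S k \<le> real n / 2^13"
    proof -
      have "S k \<le> 8 * (real (supp_size p {1..n} v) / 2 ^ 16)" using k
        by (simp add: T_def Tset_def S_def A_def f_def)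
      then show ?thesis using suppn by simp
    qed
    have "E (\<lambda>U. if (\<Sum>i\<in>U. f k i) > L then 1 else 0) \<le> exp (-4*L) * exp (q * (\<Sum>i\<in>A. 8 * f k i))"
      unfolding E_def
    proof (rule mgf_bound[OF finA q0 q1, where g = "\<lambda>i. 4 * f k i"])
      fix U :: "nat set" assume "U \<in> Pow A"
      have "(if (\<Sum>i\<in>U. f k i) > L then 1 else 0) \<le> exp (-4*L + 4 * (\<Sum>i\<in>U. f k i))" by auto
      also have "\<dots> = exp (-4*L) * exp (\<Sum>i\<in>U. 4 * f k i)"
        by (simp add: mult_exp_exp sum_distrib_left)
      finally show "(if (\<Sum>i\<in>U. f k i) > L then 1 else 0) \<le> exp (-4*L) * exp (\<Sum>i\<in>U. 4 * f k i)" .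
    next
      fix i show "exp (4 * f k i) - 1 \<le> 8 * f k i" using exp_pos_bd[of "4 * f k i"] fb[of k i] by simp
    next
      show "0 \<le> exp (-4*L)" by simp
    qed
    also have "(\<Sum>i\<in>A. 8 * f k i) = 8 * S k" by (simp add: S_def sum_distrib_left)
    also have "exp (-4*L) * exp (q * (8 * S k)) = exp (-4*L + 8 * (q * S k))" by (simp add: mult_exp_exp)
    also have "\<dots> \<le> exp (-2)"
    proof -
      have "q * S k \<le> q * (real n / 2^13)" by (intro mult_left_mono q0 Sk)
      moreover have "q * (real n / 2^13) = M / 2^14" using qn by (simp add: field_simps)
      ultimately show ?thesis using Lp L1 by simp
    qed
    also have "\<dots> \<le> 1/3" by (rule exp_small2)
    finally show ?thesis .
  qed
  have C3: "E ind3 \<le> real (card T) / 3"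
  proof -
    have "E ind3 = (\<Sum>k\<in>T. E (\<lambda>U. if (\<Sum>i\<in>U. f k i) > L then 1 else 0))"
      unfolding ind3_def by (rule Esum)
    also have "\<dots> \<le> (\<Sum>k\<in>T. 1/3)" by (rule sum_mono) (rule C3k)
    finally show ?thesis by simp
  qed
  define c where "c = 2 / real (card T)"
  have c0: "c \<ge> 0" by (simp add: c_def)
  define Phi where "Phi U = ind1 U + ind2 U + c * ind3 U" for U :: "nat set"
  have Elin: "E Phi = E ind1 + E ind2 + c * E ind3"
    unfolding E_def Phi_def by (simp add: sum.distrib sum_distrib_left algebra_simps)
  have "c * E ind3 \<le> c * (real (card T) / 3)" by (rule mult_left_mono[OF C3 c0])
  also have "\<dots> \<le> 2/3" by (simp add: c_def)
  finally have "E Phi < 1" using Elin C1 C2 by linarith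
  have "\<exists>U\<in>Pow A. Phi U < 1"
  proof (rule ccontr)
    assume "\<not> ?thesis"
    then have "\<forall>U\<in>Pow A. 1 \<le> Phi U" by (auto simp: not_less)
    then have "E (\<lambda>_. 1) \<le> E Phi" unfolding E_def
      by (intro sum_mono mult_left_mono) (auto intro: wt_nonneg[OF q0 q1])
    then show False using wsum \<open>E Phi < 1\<close> by simp
  qed
  then obtain U where U: "U \<in> Pow A" "Phi U < 1" by blast
  have i1: "ind1 U \<ge> 0" "ind2 U \<ge> 0" "ind3 U \<ge> 0"
    unfolding ind1_def ind2_def ind3_def by (auto intro: sum_nonneg)
  have "c * ind3 U \<ge> 0" using i1 c0 by simp
  then have h1: "ind1 U < 1" and h2: "ind2 U < 1" and h3: "c * ind3 U < 1"
    using U(2) i1 unfolding Phi_def by linarith+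
  have cardU: "real (card U) \<le> M" using h1 by (auto simp: ind1_def split: if_splits)
  have Fdef: "Fset p U v = {k\<in>{..<p}. (\<Sum>i\<in>U. f k i) \<le> L}"
    by (simp add: Fset_def Tset_def f_def L_def)
  have Tt: "Tset p {1..n} v (real n / 2 ^ 7) = {k\<in>{..<p}. S k \<le> real n / 2^7}"
    by (simp add: Tset_def S_def f_def A_def)
  have incl: "Fset p U v \<subseteq> Tset p {1..n} v (real n / 2 ^ 7)"
  proof
    fix k assume "k \<in> Fset p U v"
    then have k: "k < p" "(\<Sum>i\<in>U. f k i) \<le> L" by (auto simp: Fdef)
    show "k \<in> Tset p {1..n} v (real n / 2 ^ 7)"
    proof (rule ccontr)
      assume "k \<notin> Tset p {1..n} v (real n / 2 ^ 7)"
      then have "k \<in> Bad" using k unfolding Tt Bad_def by auto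
      then have "(if (\<Sum>i\<in>U. f k i) \<le> L then 1 else 0) \<le> ind2 U"
        unfolding ind2_def by (intro member_le_sum finBad) auto
      then show False using h2 k by simp
    qed
  qed
  define N where "N = {k\<in>T. (\<Sum>i\<in>U. f k i) > L}"
  have ind3N: "ind3 U = real (card N)" unfolding ind3_def N_def by (rule sum_ind[OF finT])
  have finF: "finite (Fset p U v)" by (simp add: Fdef)
  have finN: "finite N" using finT by (simp add: N_def)
  have "T \<subseteq> Fset p U v \<union> N" using Tsub by (auto simp: Fdef N_def)
  then have "card T \<le> card (Fset p U v \<union> N)" by (intro card_mono) (use finF finN in auto)
  also have "\<dots> \<le> card (Fset p U v) + card N" by (rule card_Un_le)
  finally have cT: "real (card T) \<le> real (card (Fset p U v)) + real (card N)" by linarith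
  have cardT: "real (card T) \<le> 2 * real (card (Fset p U v))"
  proof (cases "card T = 0")
    case True then show ?thesis by simp
  next
    case False
    then have "real (card T) > 0" by simp
    then have "2 * real (card N) < real (card T)" using h3 ind3N by (simp add: c_def field_simps)
    then show ?thesis using cT by linarith
  qed
  show ?thesis
    by (rule exI[of _ U]) (use U(1) cardU cardT incl in \<open>auto simp: A_def M_def T_def\<close>)
qed

end
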